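(* Assume Assumptions 1 (randomization), 2 (monotonicity) and 3 (homogeneity), and the positivity conditions $P(R=r)>0$ and $0<P(Z=1\mid R=r)<1$ for every $r$, and $P(U=u)>0$ for $u\in\{ss,s\bar{s},\bar{s}\bar{s}\}$. Then, for $u\in\{ss,s\bar{s},\bar{s}\bar{s}\}$: (a) if Assumption 4(a) holds, then $P(Y=1\mid Z=1,U=u)$ is identifiable for every such $u$; (b) if Assumption 4(b) holds, then $P(Y=1\mid Z=0,U=u)$ is identifiable for every such $u$; (c) if both Assumptions 4(a) and 4(b) hold, then $ACE_u$ is identifiable for every such $u$. Here a quantity is identifiable if any two joint distributions of $(R,Z,S(1),S(0),Y(1),Y(0))$ that satisfy the stated assumptions and induce the same distribution of the observed vector $(R,Z,S,Y)$ give the same value of that quantity.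
   Context: Setting: there are $N_R$ trials. A unit is described by a random vector $(R,Z,S(1),S(0),Y(1),Y(0))$, where $R\in\{1,\dots,N_R\}$ is the trial number, $Z\in\{0,1\}$ the treatment assignment, and $S(z),Y(z)\in\{0,1\}$ the potential surrogate and potential endpoint under treatment $z$. Observed: $S=ZS(1)+(1-Z)S(0)$, $Y=ZY(1)+(1-Z)Y(0)$. Principal stratum $U=(S(1),S(0))$ with values $(1,1),(1,0),(0,1),(0,0)$ labeled $ss,s\bar{s},\bar{s}s,\bar{s}\bar{s}$. $\pi_{ur}=P(U=u\mid R=r)$. Assumption 1 (randomization): $Z\perp\!\!\!\perp\{S(1),S(0),Y(1),Y(0)\}\mid R$. Assumption 2 (monotonicity): $S(1)\ge S(0)$ almost surely (so $\pi_{\bar{s}s,r}=0$ for all $r$). Assumption 3 (homogeneity): $R\perp\!\!\!\perp Y(z)\mid U$ for $z=0,1$. Under Assumptions 1 and 3, $ACE_{ur}=E\{Y(1)-Y(0)\mid U=u,R=r\}$ does not depend on $r$ and is denoted $ACE_u$; it equals $P(Y=1\mid Z=1,U=u)-P(Y=1\mid Z=0,U=u)$. Assumption 4(a): there exist trials $r_1,r_2$ with $\pi_{ss,r_1}\pi_{s\bar{s},r_2}\neq\pi_{ss,r_2}\pi_{s\bar{s},r_1}$. Assumption 4(b): there exist trials $r_3,r_4$ with $\pi_{s\bar{s},r_3}\pi_{\bar{s}\bar{s},r_4}\neq\pi_{s\bar{s},r_4}\pi_{\bar{s}\bar{s},r_3}$. *)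

theory Defs
  imports Complex_Main
begin

text \<open>A joint distribution of (R, Z, S(1), S(0), Y(1), Y(0)) with R in {1..N} and the
other components binary (True = 1) is given by its probability mass function
p r z s1 s0 y1 y0.\<close>

type_synonym jdist = "nat \<Rightarrow> bool \<Rightarrow> bool \<Rightarrow> bool \<Rightarrow> bool \<Rightarrow> bool \<Rightarrow> real"
type_synonym event = "nat \<Rightarrow> bool \<Rightarrow> bool \<Rightarrow> bool \<Rightarrow> bool \<Rightarrow> bool \<Rightarrow> bool"

definition is_jdist :: "nat \<Rightarrow> jdist \<Rightarrow> bool" where
  "is_jdist N p \<longleftrightarrow>
     (\<forall>r z s1 s0 y1 y0. p r z s1 s0 y1 y0 \<ge> 0) \<and>
     (\<forall>r z s1 s0 y1 y0. r \<notin> {1..N} \<longrightarrow> p r z s1 s0 y1 y0 = 0) \<and>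
     (\<Sum>r\<in>{1..N}. \<Sum>z\<in>UNIV. \<Sum>s1\<in>UNIV. \<Sum>s0\<in>UNIV. \<Sum>y1\<in>UNIV. \<Sum>y0\<in>UNIV.
        p r z s1 s0 y1 y0) = 1"

definition Pr :: "nat \<Rightarrow> jdist \<Rightarrow> event \<Rightarrow> real" where
  "Pr N p E = (\<Sum>r\<in>{1..N}. \<Sum>z\<in>UNIV. \<Sum>s1\<in>UNIV. \<Sum>s0\<in>UNIV. \<Sum>y1\<in>UNIV. \<Sum>y0\<in>UNIV.
        (if E r z s1 s0 y1 y0 then p r z s1 s0 y1 y0 else 0))"

definition cPr :: "nat \<Rightarrow> jdist \<Rightarrow> event \<Rightarrow> event \<Rightarrow> real" where
  "cPr N p A B = Pr N p (\<lambda>r z s1 s0 y1 y0. A r z s1 s0 y1 y0 \<and> B r z s1 s0 y1 y0) / Pr N p B"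

definition obsS :: "bool \<Rightarrow> bool \<Rightarrow> bool \<Rightarrow> bool" where
  "obsS z s1 s0 = (if z then s1 else s0)"
definition obsY :: "bool \<Rightarrow> bool \<Rightarrow> bool \<Rightarrow> bool" where
  "obsY z y1 y0 = (if z then y1 else y0)"

definition obs_dist :: "nat \<Rightarrow> jdist \<Rightarrow> nat \<Rightarrow> bool \<Rightarrow> bool \<Rightarrow> bool \<Rightarrow> real" where
  "obs_dist N p r' z' s' y' = Pr N p (\<lambda>r z s1 s0 y1 y0.
      r = r' \<and> z = z' \<and> obsS z s1 s0 = s' \<and> obsY z y1 y0 = y')"

definition piU :: "nat \<Rightarrow> jdist \<Rightarrow> bool \<times> bool \<Rightarrow> nat \<Rightarrow> real" where
  "piU N p u r' = cPr N p (\<lambda>r z s1 s0 y1 y0. (s1, s0) = u) (\<lambda>r z s1 s0 y1 y0. r = r')"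

text \<open>Assumption 1: Z independent of (S(1),S(0),Y(1),Y(0)) given R (product form).\<close>
definition randomization :: "nat \<Rightarrow> jdist \<Rightarrow> bool" where
  "randomization N p \<longleftrightarrow> (\<forall>r' z' a b c d.
     Pr N p (\<lambda>r z s1 s0 y1 y0. r = r' \<and> z = z' \<and> s1 = a \<and> s0 = b \<and> y1 = c \<and> y0 = d)
       * Pr N p (\<lambda>r z s1 s0 y1 y0. r = r')
     = Pr N p (\<lambda>r z s1 s0 y1 y0. r = r' \<and> z = z')
       * Pr N p (\<lambda>r z s1 s0 y1 y0. r = r' \<and> s1 = a \<and> s0 = b \<and> y1 = c \<and> y0 = d))"

definition monotonicity :: "nat \<Rightarrow> jdist \<Rightarrow> bool" where
  "monotonicity N p \<longleftrightarrow> Pr N p (\<lambda>r z s1 s0 y1 y0. \<not> s1 \<and> s0) = 0"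

definition potY :: "bool \<Rightarrow> bool \<Rightarrow> bool \<Rightarrow> bool" where
  "potY zz y1 y0 = (if zz then y1 else y0)"

text \<open>Assumption 3: R independent of Y(z) given U, for z = 0, 1 (product form).\<close>
definition homogeneity :: "nat \<Rightarrow> jdist \<Rightarrow> bool" where
  "homogeneity N p \<longleftrightarrow> (\<forall>zz r' y' u.
     Pr N p (\<lambda>r z s1 s0 y1 y0. r = r' \<and> potY zz y1 y0 = y' \<and> (s1, s0) = u)
       * Pr N p (\<lambda>r z s1 s0 y1 y0. (s1, s0) = u)
     = Pr N p (\<lambda>r z s1 s0 y1 y0. r = r' \<and> (s1, s0) = u)
       * Pr N p (\<lambda>r z s1 s0 y1 y0. potY zz y1 y0 = y' \<and> (s1, s0) = u))"

definition strata3 :: "(bool \<times> bool) set" where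
  "strata3 = {(True, True), (True, False), (False, False)}"

definition positivity :: "nat \<Rightarrow> jdist \<Rightarrow> bool" where
  "positivity N p \<longleftrightarrow>
     (\<forall>r'\<in>{1..N}. Pr N p (\<lambda>r z s1 s0 y1 y0. r = r') > 0) \<and>
     (\<forall>r'\<in>{1..N}. 0 < cPr N p (\<lambda>r z s1 s0 y1 y0. z) (\<lambda>r z s1 s0 y1 y0. r = r') \<and>
                  cPr N p (\<lambda>r z s1 s0 y1 y0. z) (\<lambda>r z s1 s0 y1 y0. r = r') < 1) \<and>
     (\<forall>u\<in>strata3. Pr N p (\<lambda>r z s1 s0 y1 y0. (s1, s0) = u) > 0)"

definition base_assumptions :: "nat \<Rightarrow> jdist \<Rightarrow> bool" where
  "base_assumptions N p \<longleftrightarrow> is_jdist N p \<and> randomization N p \<and> monotonicity N p \<and>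
     homogeneity N p \<and> positivity N p"

definition assm4a :: "nat \<Rightarrow> jdist \<Rightarrow> bool" where
  "assm4a N p \<longleftrightarrow> (\<exists>r1\<in>{1..N}. \<exists>r2\<in>{1..N}.
     piU N p (True, True) r1 * piU N p (True, False) r2 \<noteq> piU N p (True, True) r2 * piU N p (True, False) r1)"

definition assm4b :: "nat \<Rightarrow> jdist \<Rightarrow> bool" where
  "assm4b N p \<longleftrightarrow> (\<exists>r3\<in>{1..N}. \<exists>r4\<in>{1..N}.
     piU N p (True, False) r3 * piU N p (False, False) r4 \<noteq> piU N p (True, False) r4 * piU N p (False, False) r3)"

definition PY :: "nat \<Rightarrow> jdist \<Rightarrow> bool \<Rightarrow> bool \<times> bool \<Rightarrow> real" where
  "PY N p zz u = cPr N p (\<lambda>r z s1 s0 y1 y0. obsY z y1 y0)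
                         (\<lambda>r z s1 s0 y1 y0. z = zz \<and> (s1, s0) = u)"

definition ACE :: "nat \<Rightarrow> jdist \<Rightarrow> bool \<times> bool \<Rightarrow> real" where
  "ACE N p u = cPr N p (\<lambda>r z s1 s0 y1 y0. y1) (\<lambda>r z s1 s0 y1 y0. (s1, s0) = u)
             - cPr N p (\<lambda>r z s1 s0 y1 y0. y0) (\<lambda>r z s1 s0 y1 y0. (s1, s0) = u)"

end

theory Submission
  imports Defs
begin

lemma sumB: "(\<Sum>x\<in>(UNIV::bool set). f x) = f True + f False"
  by (simp add: UNIV_bool add.commute)

definition loc :: "jdist \<Rightarrow> nat \<Rightarrow> (bool \<Rightarrow> bool \<Rightarrow> bool \<Rightarrow> bool \<Rightarrow> bool \<Rightarrow> bool) \<Rightarrow> real" where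
  "loc p r E = (\<Sum>z\<in>UNIV. \<Sum>s1\<in>UNIV. \<Sum>s0\<in>UNIV. \<Sum>y1\<in>UNIV. \<Sum>y0\<in>UNIV.
        (if E z s1 s0 y1 y0 then p r z s1 s0 y1 y0 else 0))"

definition wt :: "jdist \<Rightarrow> nat \<Rightarrow> real" where "wt p r = loc p r (\<lambda>_ _ _ _ _. True)"
definition ZT :: "jdist \<Rightarrow> nat \<Rightarrow> real" where "ZT p r = loc p r (\<lambda>z _ _ _ _. z)"
definition ZF :: "jdist \<Rightarrow> nat \<Rightarrow> real" where "ZF p r = loc p r (\<lambda>z _ _ _ _. \<not> z)"
definition LU :: "jdist \<Rightarrow> bool \<times> bool \<Rightarrow> nat \<Rightarrow> real" where
  "LU p u r = loc p r (\<lambda>z s1 s0 y1 y0. (s1, s0) = u)"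
definition m1 :: "nat \<Rightarrow> jdist \<Rightarrow> bool \<times> bool \<Rightarrow> real" where
  "m1 N p u = cPr N p (\<lambda>r z s1 s0 y1 y0. y1) (\<lambda>r z s1 s0 y1 y0. (s1, s0) = u)"
definition m0 :: "nat \<Rightarrow> jdist \<Rightarrow> bool \<times> bool \<Rightarrow> real" where
  "m0 N p u = cPr N p (\<lambda>r z s1 s0 y1 y0. y0) (\<lambda>r z s1 s0 y1 y0. (s1, s0) = u)"

lemma Pr_sum: "Pr N p E = (\<Sum>r\<in>{1..N}. loc p r (E r))"
  by (simp add: Pr_def loc_def)

lemma Pr_r:
  assumes "r' \<in> {1..N}" and "\<And>r z s1 s0 y1 y0. E' r z s1 s0 y1 y0 = (r = r' \<and> E z s1 s0 y1 y0)"
  shows "Pr N p E' = loc p r' E"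
proof -
  have "Pr N p E' = (\<Sum>r\<in>{1..N}. if r = r' then loc p r' E else 0)"
    unfolding Pr_sum by (rule sum.cong[OF refl]) (auto simp: loc_def assms(2))
  also have "\<dots> = loc p r' E" using assms(1) by simp
  finally show ?thesis .
qed

lemma Pr_pt:
  assumes "r' \<in> {1..N}"
  shows "Pr N p (\<lambda>r z s1 s0 y1 y0. r = r' \<and> z = z' \<and> s1 = a \<and> s0 = b \<and> y1 = c \<and> y0 = d) = p r' z' a b c d"
proof -
  have "Pr N p (\<lambda>r z s1 s0 y1 y0. r = r' \<and> z = z' \<and> s1 = a \<and> s0 = b \<and> y1 = c \<and> y0 = d)
     = (\<Sum>r\<in>{1..N}. if r = r' then p r z' a b c d else 0)"
    unfolding Pr_def
    by (rule sum.cong[OF refl]) (cases z'; cases a; cases b; cases c; cases d; simp add: sumB)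
  also have "\<dots> = p r' z' a b c d" using assms by simp
  finally show ?thesis .
qed

lemma loc_Q: "loc p r (\<lambda>z s1 s0 y1 y0. s1 = a \<and> s0 = b \<and> y1 = c \<and> y0 = d) = p r True a b c d + p r False a b c d"
  by (cases a; cases b; cases c; cases d; simp add: loc_def sumB)

lemma lin2:
  fixes a1 b1 a2 b2 x y :: real
  assumes "a1 * x + b1 * y = 0" "a2 * x + b2 * y = 0" "a1 * b2 \<noteq> a2 * b1"
  shows "x = 0 \<and> y = 0"
proof -
  have "x * (a1 * b2 - a2 * b1) = b2 * (a1 * x + b1 * y) - b1 * (a2 * x + b2 * y)" by (simp add: algebra_simps)
  hence hx: "x * (a1 * b2 - a2 * b1) = 0" using assms by simp
  have "y * (a1 * b2 - a2 * b1) = a1 * (a2 * x + b2 * y) - a2 * (a1 * x + b1 * y)" by (simp add: algebra_simps)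
  hence hy: "y * (a1 * b2 - a2 * b1) = 0" using assms by simp
  show ?thesis using hx hy assms(3) by auto
qed

locale bp = fixes N :: nat and p :: jdist assumes base: "base_assumptions N p"
begin

lemma nn: "p r z a b c d \<ge> 0" using base by (auto simp: base_assumptions_def is_jdist_def)

lemma loc_nn: "loc p r E \<ge> 0" unfolding loc_def by (intro sum_nonneg) (auto simp: nn)

lemma mono0: assumes "r \<in> {1..N}" shows "p r z False True c d = 0"
proof -
  have "Pr N p (\<lambda>r z s1 s0 y1 y0. \<not> s1 \<and> s0) = 0" using base
    by (simp add: base_assumptions_def monotonicity_def)
  hence "(\<Sum>r\<in>{1..N}. loc p r (\<lambda>z s1 s0 y1 y0. \<not> s1 \<and> s0)) = 0" by (simp add: Pr_sum)
  hence "loc p r (\<lambda>z s1 s0 y1 y0. \<not> s1 \<and> s0) = 0" using assms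
    by (subst (asm) sum_nonneg_eq_0_iff) (auto simp: loc_nn)
  hence "p r True False True True True + p r True False True True False + p r True False True False True + p r True False True False False
       + p r False False True True True + p r False False True True False + p r False False True False True + p r False False True False False = 0"
    by (simp add: loc_def sumB algebra_simps)
  moreover have h: "\<And>z c d. 0 \<le> p r z False True c d" by (rule nn)
  ultimately have "p r True False True True True = 0 \<and> p r True False True True False = 0 \<and> p r True False True False True = 0 \<and> p r True False True False False = 0
       \<and> p r False False True True True = 0 \<and> p r False False True True False = 0 \<and> p r False False True False True = 0 \<and> p r False False True False False = 0"
    using h[of True True True] h[of True True False] h[of True False True] h[of True False False]
      h[of False True True] h[of False True False] h[of False False True] h[of False False False]
    by linarith
  then show ?thesis by (cases z; cases c; cases d) auto
qed


lemma wt_split: "wt p r = ZT p r + ZF p r"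
  by (simp add: wt_def ZT_def ZF_def loc_def sumB)

lemma wpos: assumes "r \<in> {1..N}" shows "wt p r > 0"
proof -
  have "Pr N p (\<lambda>r' z s1 s0 y1 y0. r' = r) > 0" using base assms
    by (simp add: base_assumptions_def positivity_def)
  moreover have "Pr N p (\<lambda>r' z s1 s0 y1 y0. r' = r) = wt p r"
    unfolding wt_def by (rule Pr_r[OF assms]) simp
  ultimately show ?thesis by simp
qed

lemma Zpos: assumes "r \<in> {1..N}" shows "ZT p r > 0" "ZF p r > 0"
proof -
  have "0 < cPr N p (\<lambda>r z s1 s0 y1 y0. z) (\<lambda>r' z s1 s0 y1 y0. r' = r) \<and>
        cPr N p (\<lambda>r z s1 s0 y1 y0. z) (\<lambda>r' z s1 s0 y1 y0. r' = r) < 1" using base assms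
    by (simp add: base_assumptions_def positivity_def)
  moreover have "Pr N p (\<lambda>r' z s1 s0 y1 y0. r' = r) = wt p r"
    unfolding wt_def by (rule Pr_r[OF assms]) simp
  moreover have "Pr N p (\<lambda>r' z s1 s0 y1 y0. z \<and> r' = r) = ZT p r"
    unfolding ZT_def by (rule Pr_r[OF assms]) auto
  ultimately have "0 < ZT p r / wt p r \<and> ZT p r / wt p r < 1" by (simp add: cPr_def)
  thus "ZT p r > 0" "ZF p r > 0" using wpos[OF assms] wt_split[of r]
    by (auto simp: divide_less_eq zero_less_divide_iff)
qed

lemma rand: assumes r: "r \<in> {1..N}"
  shows "p r zz a b c d * wt p r = loc p r (\<lambda>z _ _ _ _. z = zz) * (p r True a b c d + p r False a b c d)"
proof -
  from base have "randomization N p" by (simp add: base_assumptions_def)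
  hence "Pr N p (\<lambda>r' z s1 s0 y1 y0. r' = r \<and> z = zz \<and> s1 = a \<and> s0 = b \<and> y1 = c \<and> y0 = d)
       * Pr N p (\<lambda>r' z s1 s0 y1 y0. r' = r)
     = Pr N p (\<lambda>r' z s1 s0 y1 y0. r' = r \<and> z = zz)
       * Pr N p (\<lambda>r' z s1 s0 y1 y0. r' = r \<and> s1 = a \<and> s0 = b \<and> y1 = c \<and> y0 = d)"
    unfolding randomization_def by blast
  moreover have "Pr N p (\<lambda>r' z s1 s0 y1 y0. r' = r) = wt p r"
    unfolding wt_def by (rule Pr_r[OF r]) simp
  moreover have "Pr N p (\<lambda>r' z s1 s0 y1 y0. r' = r \<and> z = zz) = loc p r (\<lambda>z _ _ _ _. z = zz)"
    by (rule Pr_r[OF r]) simp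
  moreover have "Pr N p (\<lambda>r' z s1 s0 y1 y0. r' = r \<and> s1 = a \<and> s0 = b \<and> y1 = c \<and> y0 = d)
      = p r True a b c d + p r False a b c d"
    unfolding loc_Q[symmetric] by (rule Pr_r[OF r]) simp
  ultimately show ?thesis by (simp add: Pr_pt[OF r])
qed

lemma randT: "r \<in> {1..N} \<Longrightarrow> p r True a b c d * wt p r = ZT p r * (p r True a b c d + p r False a b c d)"
  using rand[of r True] by (simp add: ZT_def)
lemma randF: "r \<in> {1..N} \<Longrightarrow> p r False a b c d * wt p r = ZF p r * (p r True a b c d + p r False a b c d)"
  using rand[of r False] by (simp add: ZF_def)

lemma homog1: assumes r: "r \<in> {1..N}"
  shows "loc p r (\<lambda>z s1 s0 y1 y0. y1 \<and> (s1, s0) = u) * Pr N p (\<lambda>r z s1 s0 y1 y0. (s1, s0) = u)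
       = LU p u r * Pr N p (\<lambda>r z s1 s0 y1 y0. y1 \<and> (s1, s0) = u)"
proof -
  from base have "homogeneity N p" by (simp add: base_assumptions_def)
  hence "Pr N p (\<lambda>r' z s1 s0 y1 y0. r' = r \<and> potY True y1 y0 = True \<and> (s1, s0) = u)
       * Pr N p (\<lambda>r z s1 s0 y1 y0. (s1, s0) = u)
     = Pr N p (\<lambda>r' z s1 s0 y1 y0. r' = r \<and> (s1, s0) = u)
       * Pr N p (\<lambda>r z s1 s0 y1 y0. potY True y1 y0 = True \<and> (s1, s0) = u)"
    unfolding homogeneity_def by blast
  moreover have "Pr N p (\<lambda>r' z s1 s0 y1 y0. r' = r \<and> potY True y1 y0 = True \<and> (s1, s0) = u)
     = loc p r (\<lambda>z s1 s0 y1 y0. y1 \<and> (s1, s0) = u)"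
    by (rule Pr_r[OF r]) (simp add: potY_def)
  moreover have "Pr N p (\<lambda>r' z s1 s0 y1 y0. r' = r \<and> (s1, s0) = u) = LU p u r"
    unfolding LU_def by (rule Pr_r[OF r]) simp
  ultimately show ?thesis by (simp add: potY_def)
qed

lemma homog0: assumes r: "r \<in> {1..N}"
  shows "loc p r (\<lambda>z s1 s0 y1 y0. y0 \<and> (s1, s0) = u) * Pr N p (\<lambda>r z s1 s0 y1 y0. (s1, s0) = u)
       = LU p u r * Pr N p (\<lambda>r z s1 s0 y1 y0. y0 \<and> (s1, s0) = u)"
proof -
  from base have "homogeneity N p" by (simp add: base_assumptions_def)
  hence "Pr N p (\<lambda>r' z s1 s0 y1 y0. r' = r \<and> potY False y1 y0 = True \<and> (s1, s0) = u)
       * Pr N p (\<lambda>r z s1 s0 y1 y0. (s1, s0) = u)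
     = Pr N p (\<lambda>r' z s1 s0 y1 y0. r' = r \<and> (s1, s0) = u)
       * Pr N p (\<lambda>r z s1 s0 y1 y0. potY False y1 y0 = True \<and> (s1, s0) = u)"
    unfolding homogeneity_def by blast
  moreover have "Pr N p (\<lambda>r' z s1 s0 y1 y0. r' = r \<and> potY False y1 y0 = True \<and> (s1, s0) = u)
     = loc p r (\<lambda>z s1 s0 y1 y0. y0 \<and> (s1, s0) = u)"
    by (rule Pr_r[OF r]) (simp add: potY_def)
  moreover have "Pr N p (\<lambda>r' z s1 s0 y1 y0. r' = r \<and> (s1, s0) = u) = LU p u r"
    unfolding LU_def by (rule Pr_r[OF r]) simp
  ultimately show ?thesis by (simp add: potY_def)
qed

lemma Apos: "u \<in> strata3 \<Longrightarrow> Pr N p (\<lambda>r z s1 s0 y1 y0. (s1, s0) = u) > 0"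
  using base by (simp add: base_assumptions_def positivity_def)

lemma locY1: assumes "r \<in> {1..N}" "u \<in> strata3"
  shows "loc p r (\<lambda>z s1 s0 y1 y0. y1 \<and> (s1, s0) = u) = LU p u r * m1 N p u"
  using homog1[OF assms(1), of u] Apos[OF assms(2)]
  by (simp add: m1_def cPr_def field_simps)

lemma locY0: assumes "r \<in> {1..N}" "u \<in> strata3"
  shows "loc p r (\<lambda>z s1 s0 y1 y0. y0 \<and> (s1, s0) = u) = LU p u r * m0 N p u"
  using homog0[OF assms(1), of u] Apos[OF assms(2)]
  by (simp add: m0_def cPr_def field_simps)


lemma kn1: assumes r: "r \<in> {1..N}"
  shows "loc p r (\<lambda>z s1 s0 y1 y0. obsY z y1 y0 \<and> z \<and> (s1, s0) = (a, b)) * wt p r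
       = ZT p r * loc p r (\<lambda>z s1 s0 y1 y0. y1 \<and> (s1, s0) = (a, b))"
  apply (insert randT[OF r, of a b True True] randT[OF r, of a b True False])
  apply (cases a; cases b; simp add: loc_def sumB obsY_def ring_distribs)
  done


lemma kd1: assumes r: "r \<in> {1..N}"
  shows "loc p r (\<lambda>z s1 s0 y1 y0. z \<and> (s1, s0) = (a, b)) * wt p r = ZT p r * LU p (a, b) r"
  apply (insert randT[OF r, of a b True True] randT[OF r, of a b True False]
                randT[OF r, of a b False True] randT[OF r, of a b False False])
  apply (cases a; cases b; simp add: loc_def LU_def sumB ring_distribs)
  done

lemma kn0: assumes r: "r \<in> {1..N}"
  shows "loc p r (\<lambda>z s1 s0 y1 y0. obsY z y1 y0 \<and> \<not> z \<and> (s1, s0) = (a, b)) * wt p r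
       = ZF p r * loc p r (\<lambda>z s1 s0 y1 y0. y0 \<and> (s1, s0) = (a, b))"
  apply (insert randF[OF r, of a b True True] randF[OF r, of a b False True])
  apply (cases a; cases b; simp add: loc_def sumB obsY_def ring_distribs)
  done

lemma kd0: assumes r: "r \<in> {1..N}"
  shows "loc p r (\<lambda>z s1 s0 y1 y0. \<not> z \<and> (s1, s0) = (a, b)) * wt p r = ZF p r * LU p (a, b) r"
  apply (insert randF[OF r, of a b True True] randF[OF r, of a b True False]
                randF[OF r, of a b False True] randF[OF r, of a b False False])
  apply (cases a; cases b; simp add: loc_def LU_def sumB ring_distribs)
  done

lemma Dpos: assumes "u \<in> strata3"
  shows "(\<Sum>r\<in>{1..N}. ZT p r / wt p r * LU p u r) > 0" "(\<Sum>r\<in>{1..N}. ZF p r / wt p r * LU p u r) > 0"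
proof -
  have "(\<Sum>r\<in>{1..N}. LU p u r) > 0" using Apos[OF assms] by (simp add: Pr_sum LU_def)
  then obtain r where r: "r \<in> {1..N}" "LU p u r > 0"
    by (metis not_less sum_nonpos)
  show "(\<Sum>r\<in>{1..N}. ZT p r / wt p r * LU p u r) > 0"
    by (rule sum_pos2[OF _ r(1)]) (use r Zpos wpos in \<open>auto intro!: mult_nonneg_nonneg divide_nonneg_nonneg loc_nn simp: LU_def ZT_def wt_def\<close>)
  show "(\<Sum>r\<in>{1..N}. ZF p r / wt p r * LU p u r) > 0"
    by (rule sum_pos2[OF _ r(1)]) (use r Zpos wpos in \<open>auto intro!: mult_nonneg_nonneg divide_nonneg_nonneg loc_nn simp: LU_def ZF_def wt_def\<close>)
qed

lemma PY1: assumes u: "u \<in> strata3" shows "PY N p True u = m1 N p u"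
proof -
  obtain a b where ab: "u = (a, b)" by fastforce
  have num: "loc p r (\<lambda>z s1 s0 y1 y0. obsY z y1 y0 \<and> z = True \<and> (s1, s0) = u) = ZT p r / wt p r * LU p u r * m1 N p u"
    if r: "r \<in> {1..N}" for r
    using kn1[OF r, of a b] locY1[OF r u] wpos[OF r] by (simp add: ab field_simps)
  have den: "loc p r (\<lambda>z s1 s0 y1 y0. z = True \<and> (s1, s0) = u) = ZT p r / wt p r * LU p u r"
    if r: "r \<in> {1..N}" for r
    using kd1[OF r, of a b] wpos[OF r] by (simp add: ab field_simps)
  have "PY N p True u = (\<Sum>r\<in>{1..N}. ZT p r / wt p r * LU p u r * m1 N p u) / (\<Sum>r\<in>{1..N}. ZT p r / wt p r * LU p u r)"
    unfolding PY_def cPr_def Pr_sum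
    by (intro arg_cong2[where f="(/)"] sum.cong refl num den) auto
  also have "\<dots> = (\<Sum>r\<in>{1..N}. ZT p r / wt p r * LU p u r) * m1 N p u / (\<Sum>r\<in>{1..N}. ZT p r / wt p r * LU p u r)"
    by (simp only: sum_distrib_right)
  also have "\<dots> = m1 N p u" using Dpos(1)[OF u] by simp
  finally show ?thesis .
qed

lemma PY0: assumes u: "u \<in> strata3" shows "PY N p False u = m0 N p u"
proof -
  obtain a b where ab: "u = (a, b)" by fastforce
  have num: "loc p r (\<lambda>z s1 s0 y1 y0. obsY z y1 y0 \<and> z = False \<and> (s1, s0) = u) = ZF p r / wt p r * LU p u r * m0 N p u"
    if r: "r \<in> {1..N}" for r
    using kn0[OF r, of a b] locY0[OF r u] wpos[OF r] by (simp add: ab field_simps)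
  have den: "loc p r (\<lambda>z s1 s0 y1 y0. z = False \<and> (s1, s0) = u) = ZF p r / wt p r * LU p u r"
    if r: "r \<in> {1..N}" for r
    using kd0[OF r, of a b] wpos[OF r] by (simp add: ab field_simps)
  have "PY N p False u = (\<Sum>r\<in>{1..N}. ZF p r / wt p r * LU p u r * m0 N p u) / (\<Sum>r\<in>{1..N}. ZF p r / wt p r * LU p u r)"
    unfolding PY_def cPr_def Pr_sum
    by (intro arg_cong2[where f="(/)"] sum.cong refl num den) auto
  also have "\<dots> = (\<Sum>r\<in>{1..N}. ZF p r / wt p r * LU p u r) * m0 N p u / (\<Sum>r\<in>{1..N}. ZF p r / wt p r * LU p u r)"
    by (simp only: sum_distrib_right)
  also have "\<dots> = m0 N p u" using Dpos(2)[OF u] by simp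
  finally show ?thesis .
qed


lemma Oloc: "r \<in> {1..N} \<Longrightarrow> obs_dist N p r zz s y = loc p r (\<lambda>z s1 s0 y1 y0. z = zz \<and> obsS z s1 s0 = s \<and> obsY z y1 y0 = y)"
  unfolding obs_dist_def by (rule Pr_r) auto

lemma F1: "r \<in> {1..N} \<Longrightarrow> ZT p r = obs_dist N p r True True True + obs_dist N p r True True False
   + obs_dist N p r True False True + obs_dist N p r True False False"
  by (simp add: Oloc ZT_def loc_def sumB obsS_def obsY_def)

lemma F2: "r \<in> {1..N} \<Longrightarrow> ZF p r = obs_dist N p r False True True + obs_dist N p r False True False
   + obs_dist N p r False False True + obs_dist N p r False False False"
  by (simp add: Oloc ZF_def loc_def sumB obsS_def obsY_def)

lemma F5: assumes r: "r \<in> {1..N}"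
  shows "(obs_dist N p r False True True + obs_dist N p r False True False) * wt p r = ZF p r * LU p (True, True) r"
  apply (insert randF[OF r, of True True True True] randF[OF r, of True True True False]
                randF[OF r, of True True False True] randF[OF r, of True True False False])
  apply (simp add: Oloc[OF r] LU_def loc_def sumB obsS_def obsY_def mono0[OF r] ring_distribs)
  done

lemma F6: assumes r: "r \<in> {1..N}"
  shows "(obs_dist N p r True True True + obs_dist N p r True True False) * wt p r = ZT p r * (LU p (True, True) r + LU p (True, False) r)"
  apply (insert randT[OF r, of True True True True] randT[OF r, of True True True False]
                randT[OF r, of True True False True] randT[OF r, of True True False False]
                randT[OF r, of True False True True] randT[OF r, of True False True False]
                randT[OF r, of True False False True] randT[OF r, of True False False False])
  apply (simp add: Oloc[OF r] LU_def loc_def sumB obsS_def obsY_def mono0[OF r] ring_distribs)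
  done

lemma F7: assumes r: "r \<in> {1..N}"
  shows "(obs_dist N p r True False True + obs_dist N p r True False False) * wt p r = ZT p r * LU p (False, False) r"
  apply (insert randT[OF r, of False False True True] randT[OF r, of False False True False]
                randT[OF r, of False False False True] randT[OF r, of False False False False])
  apply (simp add: Oloc[OF r] LU_def loc_def sumB obsS_def obsY_def mono0[OF r] ring_distribs)
  done

lemma F8: assumes r: "r \<in> {1..N}"
  shows "(obs_dist N p r False False True + obs_dist N p r False False False) * wt p r = ZF p r * (LU p (True, False) r + LU p (False, False) r)"
  apply (insert randF[OF r, of True False True True] randF[OF r, of True False True False]
                randF[OF r, of True False False True] randF[OF r, of True False False False]
                randF[OF r, of False False True True] randF[OF r, of False False True False]
                randF[OF r, of False False False True] randF[OF r, of False False False False])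
  apply (simp add: Oloc[OF r] LU_def loc_def sumB obsS_def obsY_def mono0[OF r] ring_distribs)
  done

lemma F9: assumes r: "r \<in> {1..N}"
  shows "obs_dist N p r True True True * wt p r = ZT p r * (loc p r (\<lambda>z s1 s0 y1 y0. y1 \<and> (s1, s0) = (True, True))
      + loc p r (\<lambda>z s1 s0 y1 y0. y1 \<and> (s1, s0) = (True, False)))"
  apply (insert randT[OF r, of True True True True] randT[OF r, of True True True False]
                randT[OF r, of True False True True] randT[OF r, of True False True False])
  apply (simp add: Oloc[OF r] loc_def sumB obsS_def obsY_def mono0[OF r] ring_distribs)
  done

lemma F10: assumes r: "r \<in> {1..N}"
  shows "obs_dist N p r False False True * wt p r = ZF p r * (loc p r (\<lambda>z s1 s0 y1 y0. y0 \<and> (s1, s0) = (True, False))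
      + loc p r (\<lambda>z s1 s0 y1 y0. y0 \<and> (s1, s0) = (False, False)))"
  apply (insert randF[OF r, of True False True True] randF[OF r, of True False False True]
                randF[OF r, of False False True True] randF[OF r, of False False False True])
  apply (simp add: Oloc[OF r] loc_def sumB obsS_def obsY_def mono0[OF r] ring_distribs)
  done

lemma F11: "PY N p True (False, False) = (\<Sum>r\<in>{1..N}. obs_dist N p r True False True)
    / (\<Sum>r\<in>{1..N}. obs_dist N p r True False True + obs_dist N p r True False False)"
  unfolding PY_def cPr_def Pr_sum
  by (intro arg_cong2[where f="(/)"] sum.cong refl) (simp_all add: Oloc loc_def sumB obsS_def obsY_def mono0)

lemma F12: "PY N p False (True, True) = (\<Sum>r\<in>{1..N}. obs_dist N p r False True True)
    / (\<Sum>r\<in>{1..N}. obs_dist N p r False True True + obs_dist N p r False True False)"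
  unfolding PY_def cPr_def Pr_sum
  by (intro arg_cong2[where f="(/)"] sum.cong refl) (simp_all add: Oloc loc_def sumB obsS_def obsY_def mono0)

lemma piU_eq: assumes r: "r \<in> {1..N}" shows "piU N p u r = LU p u r / wt p r"
proof -
  have "Pr N p (\<lambda>r' z s1 s0 y1 y0. (s1, s0) = u \<and> r' = r) = LU p u r"
    unfolding LU_def by (rule Pr_r[OF r]) auto
  moreover have "Pr N p (\<lambda>r' z s1 s0 y1 y0. r' = r) = wt p r"
    unfolding wt_def by (rule Pr_r[OF r]) simp
  ultimately show ?thesis by (simp add: piU_def cPr_def)
qed

lemma strata: "(True, True) \<in> strata3" "(True, False) \<in> strata3" "(False, False) \<in> strata3"
  by (auto simp: strata3_def)

lemma G1: assumes r: "r \<in> {1..N}"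
  shows "piU N p (True, True) r = (obs_dist N p r False True True + obs_dist N p r False True False) / ZF p r"
  using F5[OF r] wpos[OF r] Zpos[OF r] by (simp add: piU_eq[OF r] field_simps)

lemma G2: assumes r: "r \<in> {1..N}"
  shows "piU N p (True, False) r = (obs_dist N p r True True True + obs_dist N p r True True False) / ZT p r
     - (obs_dist N p r False True True + obs_dist N p r False True False) / ZF p r"
proof -
  have a: "LU p (True, True) r / wt p r = (obs_dist N p r False True True + obs_dist N p r False True False) / ZF p r"
    using F5[OF r] wpos[OF r] Zpos[OF r] by (simp add: field_simps)
  have b: "(LU p (True, True) r + LU p (True, False) r) / wt p r = (obs_dist N p r True True True + obs_dist N p r True True False) / ZT p r"
    using F6[OF r] wpos[OF r] Zpos[OF r] by (simp add: field_simps)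
  have "piU N p (True, False) r = (LU p (True, True) r + LU p (True, False) r) / wt p r - LU p (True, True) r / wt p r"
    by (simp add: piU_eq[OF r] add_divide_distrib)
  thus ?thesis using a b by simp
qed

lemma G3: assumes r: "r \<in> {1..N}"
  shows "piU N p (False, False) r = (obs_dist N p r True False True + obs_dist N p r True False False) / ZT p r"
  using F7[OF r] wpos[OF r] Zpos[OF r] by (simp add: piU_eq[OF r] field_simps)

lemma G4: assumes r: "r \<in> {1..N}"
  shows "piU N p (True, True) r * m1 N p (True, True) + piU N p (True, False) r * m1 N p (True, False)
     = obs_dist N p r True True True / ZT p r"
  using F9[OF r] wpos[OF r] Zpos[OF r] locY1[OF r strata(1)] locY1[OF r strata(2)]
  by (simp add: piU_eq[OF r] field_simps)

lemma G5: assumes r: "r \<in> {1..N}"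
  shows "piU N p (True, False) r * m0 N p (True, False) + piU N p (False, False) r * m0 N p (False, False)
     = obs_dist N p r False False True / ZF p r"
  using F10[OF r] wpos[OF r] Zpos[OF r] locY0[OF r strata(2)] locY0[OF r strata(3)]
  by (simp add: piU_eq[OF r] field_simps)

end

theorem theorem1:
  fixes N :: nat and p q :: jdist
  assumes "base_assumptions N p" and "base_assumptions N q"
    and "obs_dist N p = obs_dist N q"
  shows "(assm4a N p \<and> assm4a N q \<longrightarrow> (\<forall>u\<in>strata3. PY N p True u = PY N q True u))
       \<and> (assm4b N p \<and> assm4b N q \<longrightarrow> (\<forall>u\<in>strata3. PY N p False u = PY N q False u))
       \<and> (assm4a N p \<and> assm4a N q \<and> assm4b N p \<and> assm4b N q \<longrightarrow>
            (\<forall>u\<in>strata3. ACE N p u = ACE N q u))"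
proof -
  interpret P: bp N p by (rule bp.intro) (rule assms(1))
  interpret Q: bp N q by (rule bp.intro) (rule assms(2))
  note O = assms(3)
  have ZTe: "ZT p r = ZT q r" if "r \<in> {1..N}" for r
    using P.F1[OF that] Q.F1[OF that] O by simp
  have ZFe: "ZF p r = ZF q r" if "r \<in> {1..N}" for r
    using P.F2[OF that] Q.F2[OF that] O by simp
  have pi1: "piU N p (True, True) r = piU N q (True, True) r" if "r \<in> {1..N}" for r
    using P.G1[OF that] Q.G1[OF that] O ZFe[OF that] by simp
  have pi2: "piU N p (True, False) r = piU N q (True, False) r" if "r \<in> {1..N}" for r
    using P.G2[OF that] Q.G2[OF that] O ZFe[OF that] ZTe[OF that] by simp
  have pi3: "piU N p (False, False) r = piU N q (False, False) r" if "r \<in> {1..N}" for r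
    using P.G3[OF that] Q.G3[OF that] O ZTe[OF that] by simp
  have e1: "piU N p (True, True) r * (m1 N p (True, True) - m1 N q (True, True))
      + piU N p (True, False) r * (m1 N p (True, False) - m1 N q (True, False)) = 0" if "r \<in> {1..N}" for r
    using P.G4[OF that] Q.G4[OF that] O ZTe[OF that] pi1[OF that] pi2[OF that]
    by (simp add: algebra_simps)
  have e0: "piU N p (True, False) r * (m0 N p (True, False) - m0 N q (True, False))
      + piU N p (False, False) r * (m0 N p (False, False) - m0 N q (False, False)) = 0" if "r \<in> {1..N}" for r
    using P.G5[OF that] Q.G5[OF that] O ZFe[OF that] pi2[OF that] pi3[OF that]
    by (simp add: algebra_simps)
  have su: "u = (True, True) \<or> u = (True, False) \<or> u = (False, False)" if "u \<in> strata3" for u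
    using that by (auto simp: strata3_def)
  have A: "\<forall>u\<in>strata3. PY N p True u = PY N q True u" if "assm4a N p"
  proof -
    from that obtain r1 r2 where r: "r1 \<in> {1..N}" "r2 \<in> {1..N}"
      and d: "piU N p (True, True) r1 * piU N p (True, False) r2 \<noteq> piU N p (True, True) r2 * piU N p (True, False) r1"
      unfolding assm4a_def by blast
    have "m1 N p (True, True) - m1 N q (True, True) = 0 \<and> m1 N p (True, False) - m1 N q (True, False) = 0"
      by (rule lin2[OF e1[OF r(1)] e1[OF r(2)] d])
    hence m: "m1 N p (True, True) = m1 N q (True, True)" "m1 N p (True, False) = m1 N q (True, False)" by auto
    show ?thesis
    proof
      fix u assume u: "u \<in> strata3"
      show "PY N p True u = PY N q True u"
        using su[OF u] m P.PY1[OF u] Q.PY1[OF u] P.F11 Q.F11 O by auto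
    qed
  qed
  have B: "\<forall>u\<in>strata3. PY N p False u = PY N q False u" if "assm4b N p"
  proof -
    from that obtain r3 r4 where r: "r3 \<in> {1..N}" "r4 \<in> {1..N}"
      and d: "piU N p (True, False) r3 * piU N p (False, False) r4 \<noteq> piU N p (True, False) r4 * piU N p (False, False) r3"
      unfolding assm4b_def by blast
    have "m0 N p (True, False) - m0 N q (True, False) = 0 \<and> m0 N p (False, False) - m0 N q (False, False) = 0"
      by (rule lin2[OF e0[OF r(1)] e0[OF r(2)] d])
    hence m: "m0 N p (True, False) = m0 N q (True, False)" "m0 N p (False, False) = m0 N q (False, False)" by auto
    show ?thesis
    proof
      fix u assume u: "u \<in> strata3"
      show "PY N p False u = PY N q False u"
        using su[OF u] m P.PY0[OF u] Q.PY0[OF u] P.F12 Q.F12 O by auto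
    qed
  qed
  have ACEe: "ACE N p' u = PY N p' True u - PY N p' False u" if "bp N p'" "u \<in> strata3" for p' u
    using bp.PY1[OF that] bp.PY0[OF that] by (simp add: ACE_def m1_def m0_def)
  show ?thesis
    using A B ACEe[OF P.bp_axioms] ACEe[OF Q.bp_axioms] by auto
qed

end
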